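(* Let $T$ be a self-affine lattice tile such that $T+\mathbb Z^n$ is a tiling of $\mathbb R^n$, with neighbor graph $G=(V,E)$, and assume all neighbors are compatible. For $u\in V\setminus\{0\}$ the following are equivalent: (a) $B_u$ is a face of $T$; (b) $B_u\not\subseteq\bigcup_{v\in V\setminus\{0,u\}}B_v$; (c) there is a finite word $\mathbf w$ over $\{1,\dots,m\}$ which is the label sequence of some directed path in $G$ starting at $u$, but is not the label sequence of any directed path in $G$ starting at any $v\in V\setminus\{0,u\}$.
   Context: Setting: $M$ is an $n\times n$ integer matrix all of whose eigenvalues have modulus $>1$, $m=|\det M|$, $k_1,\dots,k_m\in\mathbb R^n$ with $k_j-k_1\in\mathbb Z^n$ forming a complete set of residues of $\mathbb Z^n$ modulo $M\mathbb Z^n$; $f_j(x)=M^{-1}(x+k_j)$, $T=\bigcup_j f_j(T)$ compact nonempty. $B_k=T\cap(T+k)$. Neighbor graph $G=(V,E)$: $V=\{k\in\mathbb Z^n:B_k\ne\emptyset\}$; for $k,k'\in V$, an edge from $k$ to $k'$ with label $i$ iff $k'=Mk+k_j-k_i$ for some $j$. The label sequence of a path $e_1e_2\dots$ is the sequence of labels of its edges. All neighbors are compatible if every vertex $k\ne0$ of $G$ has, for each $j\in\{1,\dots,m\}$, an incoming edge with label $j$. $B_k$ ($k\ne0$) is a face of $T$ if there are $x\in B_k$ and an open neighborhood $U$ of $x$ with $U\cap\partial T\subseteq B_k$ and $U\subseteq T\cup(T+k)$. *)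

theory Defs
  imports "HOL-Analysis.Analysis"
begin

definition int_vecs :: "(real ^ 'n) set" where
  "int_vecs = {x. \<forall>i. x $ i \<in> \<int>}"

definition cmat :: "real ^ 'n ^ 'n \<Rightarrow> complex ^ 'n ^ 'n" where
  "cmat M = (\<chi> i j. complex_of_real (M $ i $ j))"

definition is_eigenvalue :: "real ^ 'n ^ 'n \<Rightarrow> complex \<Rightarrow> bool" where
  "is_eigenvalue M c \<longleftrightarrow> (\<exists>v::complex ^ 'n. v \<noteq> 0 \<and> cmat M *v v = c *s v)"

definition sa_setting ::
  "real ^ 'n ^ 'n \<Rightarrow> nat \<Rightarrow> (nat \<Rightarrow> real ^ 'n) \<Rightarrow> (real ^ 'n) set \<Rightarrow> bool" where
  "sa_setting M m k T \<longleftrightarrow>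
     (\<forall>i j. M $ i $ j \<in> \<int>) \<and>
     (\<forall>c. is_eigenvalue M c \<longrightarrow> norm c > 1) \<and>
     real m = \<bar>det M\<bar> \<and>
     (\<forall>j\<in>{1..m}. k j - k 1 \<in> int_vecs) \<and>
     (\<forall>z\<in>int_vecs. \<exists>!j. j \<in> {1..m} \<and> (\<exists>w\<in>int_vecs. z - (k j - k 1) = M *v w)) \<and>
     compact T \<and> T \<noteq> {} \<and>
     T = (\<Union>j\<in>{1..m}. (\<lambda>x. matrix_inv M *v (x + k j)) ` T)"

definition lattice_tiling :: "(real ^ 'n) set \<Rightarrow> bool" where
  "lattice_tiling T \<longleftrightarrow>
     T = closure (interior T) \<and>
     (\<Union>z\<in>int_vecs. (\<lambda>x. x + z) ` T) = UNIV \<and>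
     (\<forall>z\<in>int_vecs. \<forall>z'\<in>int_vecs. z \<noteq> z' \<longrightarrow>
        interior ((\<lambda>x. x + z) ` T) \<inter> interior ((\<lambda>x. x + z') ` T) = {})"

definition Bset :: "(real ^ 'n) set \<Rightarrow> real ^ 'n \<Rightarrow> (real ^ 'n) set" where
  "Bset T u = T \<inter> (\<lambda>x. x + u) ` T"

definition nb_vertices :: "(real ^ 'n) set \<Rightarrow> (real ^ 'n) set" where
  "nb_vertices T = {u \<in> int_vecs. Bset T u \<noteq> {}}"

definition nb_edge ::
  "real ^ 'n ^ 'n \<Rightarrow> nat \<Rightarrow> (nat \<Rightarrow> real ^ 'n) \<Rightarrow> (real ^ 'n) set \<Rightarrow>
   real ^ 'n \<Rightarrow> real ^ 'n \<Rightarrow> nat \<Rightarrow> bool" where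
  "nb_edge M m k T u u' i \<longleftrightarrow>
     u \<in> nb_vertices T \<and> u' \<in> nb_vertices T \<and> i \<in> {1..m} \<and>
     (\<exists>j\<in>{1..m}. u' = M *v u + k j - k i)"

fun path_word ::
  "real ^ 'n ^ 'n \<Rightarrow> nat \<Rightarrow> (nat \<Rightarrow> real ^ 'n) \<Rightarrow> (real ^ 'n) set \<Rightarrow>
   real ^ 'n \<Rightarrow> nat list \<Rightarrow> bool" where
  "path_word M m k T u [] \<longleftrightarrow> u \<in> nb_vertices T"
| "path_word M m k T u (i # w) \<longleftrightarrow> (\<exists>u'. nb_edge M m k T u u' i \<and> path_word M m k T u' w)"

definition all_compatible ::
  "real ^ 'n ^ 'n \<Rightarrow> nat \<Rightarrow> (nat \<Rightarrow> real ^ 'n) \<Rightarrow> (real ^ 'n) set \<Rightarrow> bool" where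
  "all_compatible M m k T \<longleftrightarrow>
     (\<forall>u\<in>nb_vertices T. u \<noteq> 0 \<longrightarrow> (\<forall>j\<in>{1..m}. \<exists>u'. nb_edge M m k T u' u j))"

definition is_face :: "(real ^ 'n) set \<Rightarrow> real ^ 'n \<Rightarrow> bool" where
  "is_face T u \<longleftrightarrow>
     (\<exists>x\<in>Bset T u. \<exists>U. open U \<and> x \<in> U \<and> U \<inter> frontier T \<subseteq> Bset T u \<and>
        U \<subseteq> T \<union> (\<lambda>y. y + u) ` T)"

end

theory Submission
  imports Defs Jordan_Normal_Form.Spectral_Radius
begin

no_notation Matrix.vec_index (infixl "$" 100)

lemma smult_mat_vec_aux:
  assumes "A \<in> carrier_mat n n" "v \<in> carrier_vec n"
  shows "(c \<cdot>\<^sub>m A) *\<^sub>v v = (c::complex) \<cdot>\<^sub>v (A *\<^sub>v v)"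
  by (rule eq_vecI) (use assms in auto)

lemma jnf_contract:
  fixes B :: "complex mat"
  assumes B: "B \<in> carrier_mat n n" and n: "n > 0"
    and ev: "\<And>l. eigenvalue B l \<Longrightarrow> norm l < 1"
  shows "\<exists>c r. 0 < r \<and> r < 1 \<and> (\<forall>k i j. i < n \<longrightarrow> j < n \<longrightarrow> norm ((B ^\<^sub>m k) $$ (i,j)) \<le> c * r^k)"
proof -
  define s where "s = spectral_radius B"
  have "s \<in> norm ` spectrum B" using spectral_radius_mem_max(1)[OF B n] s_def by simp
  then have s1: "s < 1" and s0: "0 \<le> s" using ev by (auto simp: spectrum_def)
  define r where "r = (1 + s)/2"
  have r: "0 < r" "r < 1" "s < r" using s0 s1 by (auto simp: r_def)
  define B' where "B' = (complex_of_real (1/r)) \<cdot>\<^sub>m B"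
  have B': "B' \<in> carrier_mat n n" by (simp add: B'_def B)
  have BB: "B = complex_of_real r \<cdot>\<^sub>m B'" using r B by (auto simp: B'_def intro!: eq_matI)
  have ev': "norm l < 1" if "eigenvalue B' l" for l
  proof -
    from that obtain v where v: "v \<in> carrier_vec n" "v \<noteq> 0\<^sub>v n" "B' *\<^sub>v v = l \<cdot>\<^sub>v v"
      unfolding eigenvalue_def eigenvector_def using B' by auto
    have "B *\<^sub>v v = complex_of_real r \<cdot>\<^sub>v (B' *\<^sub>v v)"
      unfolding BB by (rule smult_mat_vec_aux[OF B' v(1)])
    also have "\<dots> = (complex_of_real r * l) \<cdot>\<^sub>v v" using v by (simp add: smult_smult_assoc)
    finally have "eigenvalue B (complex_of_real r * l)"
      unfolding eigenvalue_def eigenvector_def using v B by auto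
    then have "norm (complex_of_real r * l) \<le> s"
      using spectral_radius_mem_max(2)[OF B n] s_def by (auto simp: spectrum_def)
    then have "r * norm l \<le> s" using r by (simp add: norm_mult)
    then have "r * norm l < r * 1" using r by linarith
    then show ?thesis using r by (simp add: mult_less_cancel_left_pos)
  qed
  have "spectral_radius B' \<in> norm ` spectrum B'" using spectral_radius_mem_max(1)[OF B' n] .
  then have sr: "spectral_radius B' < 1" using ev' by (auto simp: spectrum_def)
  from char_poly_factorized[OF B'] obtain as where "char_poly B' = (\<Prod>a\<leftarrow>as. [:- a, 1:])" by auto
  from jordan_nf_exists[OF B' this] have "\<exists>n_as. jordan_nf B' n_as" .
  from spectral_radius_jnf_norm_bound_less_1[OF B' sr this] obtain c where c: "\<And>k. norm_bound (B' ^\<^sub>m k) c" by auto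
  have pw: "B ^\<^sub>m k = complex_of_real (r^k) \<cdot>\<^sub>m (B' ^\<^sub>m k)" for k
  proof (induction k)
    case 0 then show ?case using B B' by (auto intro!: eq_matI)
  next
    case (Suc k)
    have "B ^\<^sub>m Suc k = (complex_of_real (r^k) \<cdot>\<^sub>m (B' ^\<^sub>m k)) * (complex_of_real r \<cdot>\<^sub>m B')"
      using Suc BB by simp
    also have "\<dots> = complex_of_real (r^Suc k) \<cdot>\<^sub>m (B' ^\<^sub>m Suc k)"
      using B' by (auto intro!: eq_matI simp: scalar_prod_def sum_distrib_left algebra_simps)
    finally show ?case .
  qed
  show ?thesis
  proof (intro exI conjI allI impI)
    fix k i j assume ij: "i < n" "j < n"
    have "norm ((B ^\<^sub>m k) $$ (i,j)) = r^k * norm ((B' ^\<^sub>m k) $$ (i,j))"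
      using ij B' r by (simp add: pw norm_mult norm_power)
    also have "\<dots> \<le> r^k * c" using c[of k] ij B' r unfolding norm_bound_def
      by (intro mult_left_mono) auto
    finally show "norm ((B ^\<^sub>m k) $$ (i,j)) \<le> c * r^k" by (simp add: mult.commute)
  qed (use r in auto)
qed

lemma vec_eqI': fixes x y :: "'a^'b" assumes "\<And>i. x $ i = y $ i" shows "x = y" using assms by (simp add: Finite_Cartesian_Product.vec_eq_iff)

lemma cmat_mult: "cmat (A ** B) = cmat A ** cmat (B::real^'n^'n)"
  by (simp add: cmat_def matrix_matrix_mult_def Finite_Cartesian_Product.vec_eq_iff)

lemma cmat_one: "cmat (Finite_Cartesian_Product.mat 1 :: real^'n^'n) = Finite_Cartesian_Product.mat 1"
  by (rule vec_eqI', rule vec_eqI', simp add: cmat_def Finite_Cartesian_Product.mat_def)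

lemma vec_contract:
  fixes A A' :: "real^'n^'n"
  assumes ev: "\<forall>c. is_eigenvalue A' c \<longrightarrow> norm c > 1" and inv: "A' ** A = Finite_Cartesian_Product.mat 1"
  shows "\<exists>C r. 0 \<le> C \<and> 0 < r \<and> r < 1 \<and> (\<forall>p d. norm (((*v) A ^^ p) d) \<le> C * r^p * norm d)"
proof -
  define N where "N = CARD('n)"
  have N0: "N > 0" by (simp add: N_def)
  obtain h :: "'n \<Rightarrow> nat" where h: "bij_betw h UNIV {0..<N}"
    using ex_bij_betw_finite_nat[of "UNIV::'n set"] N_def by auto
  define g where "g = inv_into UNIV h"
  have hg: "\<And>i. i < N \<Longrightarrow> h (g i) = i" using h unfolding g_def
    by (simp add: bij_betw_inv_into_right)
  have gh: "\<And>a. g (h a) = a" using h unfolding g_def by (simp add: bij_betw_def)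
  have hN: "\<And>a. h a < N" using h by (auto simp: bij_betw_def)
  have hinj: "inj h" using h by (simp add: bij_betw_def)
  have reidx: "(\<Sum>l<N. F l) = (\<Sum>a\<in>UNIV. F (h a))" for F :: "nat \<Rightarrow> complex"
  proof -
    have "(\<Sum>a\<in>UNIV. F (h a)) = sum F (h ` UNIV)" using hinj by (simp add: sum.reindex)
    also have "h ` UNIV = {..<N}" using h by (auto simp: bij_betw_def)
    finally show ?thesis by simp
  qed
  define B where "B = Matrix.mat N N (\<lambda>(i,j). complex_of_real (A $ g i $ g j))"
  have B: "B \<in> carrier_mat N N" by (simp add: B_def)
  have Bidx: "B $$ (h a, h b) = complex_of_real (A $ a $ b)" for a b
    using hN by (simp add: B_def gh)
  have pw: "complex_of_real ((((*v) A ^^ k) d) $ a) = (\<Sum>b\<in>UNIV. (B ^\<^sub>m k) $$ (h a, h b) * complex_of_real (d $ b))" for k d a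
  proof (induction k arbitrary: d)
    case 0
    have "(\<Sum>b\<in>UNIV. (B ^\<^sub>m 0) $$ (h a, h b) * complex_of_real (d $ b))
        = (\<Sum>b\<in>UNIV. (if b = a then complex_of_real (d $ b) else 0))"
      using hN hinj B by (intro sum.cong) (auto simp: inj_eq)
    then show ?case by simp
  next
    case (Suc k)
    have "complex_of_real ((((*v) A ^^ Suc k) d) $ a) = complex_of_real ((((*v) A ^^ k) (A *v d)) $ a)"
      by (simp add: funpow_Suc_right del: funpow.simps)
    also have "\<dots> = (\<Sum>c\<in>UNIV. (B ^\<^sub>m k) $$ (h a, h c) * complex_of_real ((A *v d) $ c))"
      using Suc by simp
    also have "\<dots> = (\<Sum>c\<in>UNIV. (B ^\<^sub>m k) $$ (h a, h c) * (\<Sum>b\<in>UNIV. B $$ (h c, h b) * complex_of_real (d $ b)))"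
      by (simp add: matrix_vector_mult_def Bidx)
    also have "\<dots> = (\<Sum>b\<in>UNIV. (\<Sum>c\<in>UNIV. (B ^\<^sub>m k) $$ (h a, h c) * B $$ (h c, h b)) * complex_of_real (d $ b))"
      unfolding sum_distrib_left sum_distrib_right by (subst sum.swap) (simp add: mult.assoc)
    also have "\<dots> = (\<Sum>b\<in>UNIV. (B ^\<^sub>m Suc k) $$ (h a, h b) * complex_of_real (d $ b))"
    proof (intro sum.cong refl)
      fix b
      have "(B ^\<^sub>m Suc k) $$ (h a, h b) = (\<Sum>l<N. (B ^\<^sub>m k) $$ (h a, l) * B $$ (l, h b))"
        using B hN by (simp add: scalar_prod_def atLeast0LessThan)
      also have "\<dots> = (\<Sum>c\<in>UNIV. (B ^\<^sub>m k) $$ (h a, h c) * B $$ (h c, h b))"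
        by (rule reidx)
      finally show "(\<Sum>c\<in>UNIV. (B ^\<^sub>m k) $$ (h a, h c) * B $$ (h c, h b)) * complex_of_real (d $ b)
          = (B ^\<^sub>m Suc k) $$ (h a, h b) * complex_of_real (d $ b)" by simp
    qed
    finally show ?case .
  qed
  have evB: "norm l < 1" if "eigenvalue B l" for l
  proof -
    from that obtain v where v: "v \<in> carrier_vec N" "v \<noteq> 0\<^sub>v N" "B *\<^sub>v v = l \<cdot>\<^sub>v v"
      unfolding eigenvalue_def eigenvector_def using B by auto
    define w :: "complex^'n" where "w = (\<chi> a. vec_index v (h a))"
    have Aw: "cmat A *v w = l *s w"
    proof (rule vec_eqI')
      fix a
      have "vec_index (B *\<^sub>v v) (h a) = (\<Sum>j<N. B $$ (h a, j) * vec_index v j)"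
        using B v(1) hN by (simp add: scalar_prod_def atLeast0LessThan)
      also have "\<dots> = (\<Sum>b\<in>UNIV. B $$ (h a, h b) * vec_index v (h b))" by (rule reidx)
      also have "\<dots> = (cmat A *v w) $ a"
        by (simp add: Bidx matrix_vector_mult_def cmat_def w_def)
      finally have "(cmat A *v w) $ a = vec_index (B *\<^sub>v v) (h a)" by simp
      also have "\<dots> = l * vec_index v (h a)" using v hN by simp
      finally show "(cmat A *v w) $ a = (l *s w) $ a" by (simp add: w_def)
    qed
    obtain i where i: "i < N" "vec_index v i \<noteq> 0"
    proof -
      have "\<exists>i<N. vec_index v i \<noteq> 0"
      proof (rule ccontr)
        assume "\<not> ?thesis"
        then have "v = 0\<^sub>v N" using v by (intro eq_vecI) auto
        then show False using v by simp
      qed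
      then show ?thesis using that by blast
    qed
    have w0: "w \<noteq> 0"
    proof
      assume "w = 0"
      then have "w $ g i = 0" by simp
      then show False using i hg by (simp add: w_def)
    qed
    have "w = cmat A' *v (cmat A *v w)"
      by (simp add: matrix_vector_mul_assoc cmat_mult[symmetric] inv cmat_one)
    also have "\<dots> = l *s (cmat A' *v w)" by (simp add: Aw vector_scalar_commute)
    finally have ww: "w = l *s (cmat A' *v w)" .
    have l0: "l \<noteq> 0" using ww w0 by auto
    have "cmat A' *v w = (1/l) *s w"
      using arg_cong[OF ww, of "\<lambda>x. (1/l) *s x"] l0 by (simp add: vector_smult_assoc)
    then have "is_eigenvalue A' (1/l)" using w0 unfolding is_eigenvalue_def by blast
    then have "norm (1/l) > 1" using ev by blast
    then have "inverse (norm l) > 1" by (simp add: divide_inverse norm_inverse)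
    moreover have np: "norm l > 0" using l0 by simp
    ultimately have "norm l * 1 < norm l * inverse (norm l)" by (intro mult_strict_left_mono)
    moreover have "norm l * inverse (norm l) = 1" using np by simp
    ultimately show ?thesis by linarith
  qed
  obtain c r where cr: "0 < r" "r < 1"
    and bnd: "\<And>k i j. i < N \<Longrightarrow> j < N \<Longrightarrow> norm ((B ^\<^sub>m k) $$ (i,j)) \<le> c * r^k"
    using jnf_contract[OF B N0 evB] by blast
  define c' where "c' = max c 0"
  have bnd': "norm ((B ^\<^sub>m k) $$ (i,j)) \<le> c' * r^k" if "i < N" "j < N" for k i j
  proof -
    have "c * r^k \<le> c' * r^k" using cr by (intro mult_right_mono) (auto simp: c'_def)
    then show ?thesis using bnd[OF that, of k] by linarith
  qed
  show ?thesis
  proof (intro exI conjI allI)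
    fix p d
    let ?x = "((*v) A ^^ p) d"
    have comp: "\<bar>?x $ a\<bar> \<le> real N * (c' * r^p * norm d)" for a
    proof -
      have "\<bar>?x $ a\<bar> = norm (complex_of_real (?x $ a))" by simp
      also have "\<dots> = norm (\<Sum>b\<in>UNIV. (B ^\<^sub>m p) $$ (h a, h b) * complex_of_real (d $ b))"
        by (simp only: pw)
      also have "\<dots> \<le> (\<Sum>b\<in>(UNIV::'n set). c' * r^p * norm d)"
      proof (rule order_trans[OF norm_sum], rule sum_mono)
        fix b
        have "norm ((B ^\<^sub>m p) $$ (h a, h b) * complex_of_real (d $ b))
            = norm ((B ^\<^sub>m p) $$ (h a, h b)) * \<bar>d $ b\<bar>" by (simp add: norm_mult)
        also have "\<dots> \<le> (c' * r^p) * norm d"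
          using bnd'[OF hN hN] cr by (intro mult_mono) (auto simp: component_le_norm_cart c'_def)
        finally show "norm ((B ^\<^sub>m p) $$ (h a, h b) * complex_of_real (d $ b)) \<le> c' * r^p * norm d" .
      qed
      also have "\<dots> = real N * (c' * r^p * norm d)" by (simp add: N_def)
      finally show ?thesis .
    qed
    have "norm ?x \<le> (\<Sum>a\<in>UNIV. \<bar>?x $ a\<bar>)" by (rule norm_le_l1_cart)
    also have "\<dots> \<le> (\<Sum>a\<in>(UNIV::'n set). real N * (c' * r^p * norm d))" by (intro sum_mono comp)
    also have "\<dots> = (real N * real N * c') * r^p * norm d" by (simp add: N_def)
    finally show "norm ?x \<le> (real N * real N * c') * r^p * norm d" .
  qed (use cr in \<open>auto simp: c'_def\<close>)
qed


definition fw :: "real^'n^'n \<Rightarrow> (nat \<Rightarrow> real^'n) \<Rightarrow> nat list \<Rightarrow> real^'n \<Rightarrow> real^'n" where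
  "fw A k w x = foldr (\<lambda>i y. A *v (y + k i)) w x"

lemma fw_Nil[simp]: "fw A k [] x = x" by (simp add: fw_def)
lemma fw_Cons[simp]: "fw A k (i # w) x = A *v (fw A k w x + k i)" by (simp add: fw_def)

lemma fw_diff: "fw A k w x - fw A k w y = ((*v) A ^^ length w) (x - y)"
  by (induction w) (simp_all add: matrix_vector_mult_diff_distrib[symmetric])

lemma tr_eq: fixes v :: "'a::ab_semigroup_add" shows "(\<lambda>y. y + v) ` S = (+) v ` S"
  by (rule image_cong, simp, rule add.commute)

lemma int_vecs_add: "x \<in> int_vecs \<Longrightarrow> y \<in> int_vecs \<Longrightarrow> x + y \<in> int_vecs"
  by (auto simp: int_vecs_def)
lemma int_vecs_diff: "x \<in> int_vecs \<Longrightarrow> y \<in> int_vecs \<Longrightarrow> x - y \<in> int_vecs"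
  by (auto simp: int_vecs_def)
lemma int_vecs_zero: "0 \<in> int_vecs"
  by (auto simp: int_vecs_def)
lemma int_vecs_mult: "(\<forall>i j. M $ i $ j \<in> \<int>) \<Longrightarrow> v \<in> int_vecs \<Longrightarrow> M *v v \<in> int_vecs"
  by (auto simp: int_vecs_def matrix_vector_mult_def intro!: Ints_sum Ints_mult)

lemma finite_lattice_ball: "finite {v \<in> int_vecs. norm (v::real^'n) \<le> R}"
proof -
  let ?c = "\<lceil>R\<rceil>"
  have "{v \<in> int_vecs. norm (v::real^'n) \<le> R} \<subseteq> (\<lambda>f. \<chi> i. real_of_int (f i)) ` (PiE UNIV (\<lambda>_. {-?c..?c}))"
  proof
    fix v :: "real^'n" assume v: "v \<in> {v \<in> int_vecs. norm v \<le> R}"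
    define f where "f = (\<lambda>i. \<lfloor>v $ i\<rfloor>)"
    have eq: "real_of_int (f i) = v $ i" for i
    proof -
      have "v $ i \<in> \<int>" using v by (auto simp: int_vecs_def)
      then show ?thesis by (auto simp: f_def elim!: Ints_cases)
    qed
    have "\<bar>v $ i\<bar> \<le> R" for i using v component_le_norm_cart[of v i] by auto
    have "f i \<in> {-?c..?c}" for i
    proof -
      have a: "\<bar>real_of_int (f i)\<bar> \<le> R" using eq[of i] \<open>\<bar>v $ i\<bar> \<le> R\<close> by simp
      have "R \<le> real_of_int ?c" by (rule le_of_int_ceiling)
      moreover have "real_of_int (f i) \<le> R" "- R \<le> real_of_int (f i)" using a by linarith+
      ultimately have "real_of_int (f i) \<le> real_of_int ?c" "real_of_int (- ?c) \<le> real_of_int (f i)" by simp_all linarith+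
      then show ?thesis by (simp only: of_int_le_iff atLeastAtMost_iff) 
    qed
    then have "f \<in> PiE UNIV (\<lambda>_. {-?c..?c})" by auto
    moreover have "v = (\<chi> i. real_of_int (f i))" by (simp add: eq Finite_Cartesian_Product.vec_eq_iff)
    ultimately show "v \<in> (\<lambda>f. \<chi> i. real_of_int (f i)) ` (PiE UNIV (\<lambda>_. {-?c..?c}))" by blast
  qed
  moreover have "finite (PiE (UNIV::'n set) (\<lambda>_. {-?c..?c}))" by (intro finite_PiE) auto
  ultimately show ?thesis by (meson finite_surj)
qed

lemma sa_m_pos: assumes "sa_setting M m k T" shows "1 \<le> m"
proof -
  from assms have "\<forall>z\<in>int_vecs. \<exists>!j. j \<in> {1..m} \<and> (\<exists>w\<in>int_vecs. z - (k j - k 1) = M *v w)"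
    by (simp add: sa_setting_def)
  then obtain j where "j \<in> {1..m}" using int_vecs_zero by blast
  then show ?thesis by auto
qed

lemma sa_inv: assumes "sa_setting M m k T"
  shows "M ** matrix_inv M = Finite_Cartesian_Product.mat 1" "matrix_inv M ** M = Finite_Cartesian_Product.mat 1"
proof -
  have "real m = \<bar>Determinants.det M\<bar>" using assms by (simp add: sa_setting_def)
  moreover have "1 \<le> m" by (rule sa_m_pos[OF assms])
  ultimately have "Determinants.det M \<noteq> 0" by auto
  then have "invertible M" by (simp add: invertible_det_nz)
  then have "\<exists>A'. M ** A' = Finite_Cartesian_Product.mat 1 \<and> A' ** M = Finite_Cartesian_Product.mat 1"
    by (simp add: invertible_def)
  from someI_ex[OF this]
  show "M ** matrix_inv M = Finite_Cartesian_Product.mat 1" "matrix_inv M ** M = Finite_Cartesian_Product.mat 1"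
    by (simp_all add: matrix_inv_def)
qed

lemma sa_T_closed: assumes S: "sa_setting M m k T" and "j \<in> {1..m}" "x \<in> T"
  shows "matrix_inv M *v (x + k j) \<in> T"
proof -
  have Teq: "T = (\<Union>j\<in>{1..m}. (\<lambda>x. matrix_inv M *v (x + k j)) ` T)" using S by (simp add: sa_setting_def)
  have "matrix_inv M *v (x + k j) \<in> (\<Union>j\<in>{1..m}. (\<lambda>x. matrix_inv M *v (x + k j)) ` T)" using assms by blast
  then show ?thesis using equalityD2[OF Teq] by blast
qed

lemma sa_T_dec: assumes S: "sa_setting M m k T" and "x \<in> T"
  shows "\<exists>j y. j \<in> {1..m} \<and> y \<in> T \<and> x = matrix_inv M *v (y + k j)"
proof -
  have Teq: "T = (\<Union>j\<in>{1..m}. (\<lambda>x. matrix_inv M *v (x + k j)) ` T)" using S by (simp add: sa_setting_def)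
  have "x \<in> (\<Union>j\<in>{1..m}. (\<lambda>x. matrix_inv M *v (x + k j)) ` T)" using assms equalityD1[OF Teq] by blast
  then show ?thesis by blast
qed

lemma sa_fw_T: assumes S: "sa_setting M m k T" and w: "set w \<subseteq> {1..m}"
  shows "fw (matrix_inv M) k w ` T \<subseteq> T"
  using w
proof (induction w)
  case Nil then show ?case by simp
next
  case (Cons i w)
  show ?case
  proof
    fix x assume "x \<in> fw (matrix_inv M) k (i # w) ` T"
    then obtain z where z: "z \<in> T" "x = matrix_inv M *v (fw (matrix_inv M) k w z + k i)" by auto
    have "fw (matrix_inv M) k w z \<in> T" using Cons z by auto
    moreover have "i \<in> {1..m}" using Cons by auto
    ultimately show "x \<in> T" using z sa_T_closed[OF S] by blast
  qed
qed

lemma sa_cover: assumes S: "sa_setting M m k T"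
  shows "x \<in> T \<Longrightarrow> \<exists>w. length w = p \<and> set w \<subseteq> {1..m} \<and> x \<in> fw (matrix_inv M) k w ` T"
proof (induction p arbitrary: x)
  case 0 then show ?case by auto
next
  case (Suc p)
  obtain j y where jy: "j \<in> {1..m}" "y \<in> T" "x = matrix_inv M *v (y + k j)" using sa_T_dec[OF S Suc.prems] by blast
  from Suc.IH[OF jy(2)] obtain w z where w: "length w = p" "set w \<subseteq> {1..m}" "z \<in> T" "y = fw (matrix_inv M) k w z"
    by auto
  show ?case using jy w by (intro exI[of _ "j # w"]) auto
qed

lemma sa_key: assumes S: "sa_setting M m k T"
  shows "matrix_inv M *v (y + (M *v v + k j - k i) + k i) = matrix_inv M *v (y + k j) + v"
proof -
  have "y + (M *v v + k j - k i) + k i = (y + k j) + M *v v" by (simp add: algebra_simps)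
  then show ?thesis
    by (simp add: matrix_vector_right_distrib matrix_vector_mul_assoc sa_inv[OF S] matrix_vector_mul_lid)
qed

lemma sa_path_iff:
  assumes S: "sa_setting M m k T"
  shows "v \<in> int_vecs \<Longrightarrow> set w \<subseteq> {1..m} \<Longrightarrow>
    path_word M m k T v w \<longleftrightarrow> fw (matrix_inv M) k w ` T \<inter> (\<lambda>x. x + v) ` T \<noteq> {}"
proof (induction w arbitrary: v)
  case Nil
  then show ?case by (simp add: nb_vertices_def Bset_def)
next
  case (Cons i w)
  let ?Mi = "matrix_inv M"
  have intM: "\<forall>i j. M $ i $ j \<in> \<int>" using S by (simp add: sa_setting_def)
  have kint: "\<forall>j\<in>{1..m}. k j - k 1 \<in> int_vecs" using S by (simp add: sa_setting_def)
  have kd: "k j - k i' \<in> int_vecs" if "j \<in> {1..m}" "i' \<in> {1..m}" for j i'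
  proof -
    have "k j - k i' = (k j - k 1) - (k i' - k 1)" by simp
    then show ?thesis using kint that int_vecs_diff by metis
  qed
  have i: "i \<in> {1..m}" and w: "set w \<subseteq> {1..m}" using Cons.prems by auto
  show ?case
  proof
    assume "path_word M m k T v (i # w)"
    then obtain v' where e: "nb_edge M m k T v v' i" and pw: "path_word M m k T v' w" by auto
    from e obtain j where j: "j \<in> {1..m}" "v' = M *v v + k j - k i" and v'V: "v' \<in> nb_vertices T"
      unfolding nb_edge_def by blast
    have v'I: "v' \<in> int_vecs" using v'V by (simp add: nb_vertices_def)
    from Cons.IH[OF v'I w] pw obtain z t where zt: "z \<in> T" "t \<in> T" "fw ?Mi k w z = t + v'" by auto
    have "fw ?Mi k (i # w) z = ?Mi *v (t + v' + k i)" using zt by simp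
    also have "\<dots> = ?Mi *v (t + k j) + v" using sa_key[OF S] j by simp
    finally have eq: "fw ?Mi k (i # w) z = ?Mi *v (t + k j) + v" .
    have "?Mi *v (t + k j) \<in> T" using sa_T_closed[OF S j(1) zt(2)] .
    then show "fw ?Mi k (i # w) ` T \<inter> (\<lambda>x. x + v) ` T \<noteq> {}" using eq zt by blast
  next
    assume "fw ?Mi k (i # w) ` T \<inter> (\<lambda>x. x + v) ` T \<noteq> {}"
    then obtain z t where zt: "z \<in> T" "t \<in> T" "fw ?Mi k (i # w) z = t + v" by auto
    from sa_T_dec[OF S zt(2)] obtain j s where js: "j \<in> {1..m}" "s \<in> T" "t = ?Mi *v (s + k j)" by blast
    define v' where "v' = M *v v + k j - k i"
    define y where "y = fw ?Mi k w z"
    have "?Mi *v (y + k i) = ?Mi *v (s + k j) + v" using zt js by (simp add: y_def)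
    then have "M *v (?Mi *v (y + k i)) = M *v (?Mi *v (s + k j) + v)" by simp
    then have "y + k i = s + k j + M *v v"
      by (simp add: matrix_vector_right_distrib matrix_vector_mul_assoc sa_inv[OF S] matrix_vector_mul_lid)
    then have ysv: "y = s + v'" by (simp add: v'_def algebra_simps)
    have v'I: "v' \<in> int_vecs" unfolding v'_def
      using int_vecs_add[OF int_vecs_mult[OF intM Cons.prems(1)] kd[OF js(1) i]] by (simp add: algebra_simps)
    have yT: "y \<in> T" using sa_fw_T[OF S w] zt(1) by (auto simp: y_def)
    have yin: "fw ?Mi k w ` T \<inter> (\<lambda>x. x + v') ` T \<noteq> {}" using ysv js(2) zt(1) by (auto simp: y_def)
    have pw: "path_word M m k T v' w" using Cons.IH[OF v'I w] yin by simp
    have v'V: "v' \<in> nb_vertices T" using v'I yT ysv js(2) by (auto simp: nb_vertices_def Bset_def)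
    have "t + v \<in> T" using sa_fw_T[OF S, of "i # w"] i w zt by auto
    then have vV: "v \<in> nb_vertices T" using Cons.prems(1) zt(2) by (auto simp: nb_vertices_def Bset_def)
    have "nb_edge M m k T v v' i" unfolding nb_edge_def using vV v'V i js(1) v'_def by blast
    then show "path_word M m k T v (i # w)" using pw by auto
  qed
qed



theorem theorem9p3:
  fixes M :: "real ^ 'n ^ 'n" and m :: nat and k :: "nat \<Rightarrow> real ^ 'n"
    and T :: "(real ^ 'n) set" and u :: "real ^ 'n"
  assumes "sa_setting M m k T"
    and "lattice_tiling T"
    and "all_compatible M m k T"
    and "u \<in> nb_vertices T" and "u \<noteq> 0"
  shows "(is_face T u \<longleftrightarrow> \<not> Bset T u \<subseteq> (\<Union>v\<in>nb_vertices T - {0, u}. Bset T v))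
       \<and> (\<not> Bset T u \<subseteq> (\<Union>v\<in>nb_vertices T - {0, u}. Bset T v) \<longleftrightarrow>
           (\<exists>w::nat list. set w \<subseteq> {1..m} \<and> path_word M m k T u w \<and>
              (\<forall>v\<in>nb_vertices T - {0, u}. \<not> path_word M m k T v w)))"
proof -
  note S = assms(1)
  have cT: "compact T" and TneE: "T \<noteq> {}" using S by (auto simp: sa_setting_def)
  have clT: "closed T" using cT by (rule compact_imp_closed)
  have bT: "bounded T" using cT by (rule compact_imp_bounded)
  then obtain R where R0: "R > 0" and R: "\<And>t. t \<in> T \<Longrightarrow> norm t \<le> R" by (auto simp: bounded_pos)
  have tiling: "T = closure (interior T)"
    "(\<Union>z\<in>int_vecs. (\<lambda>x. x + z) ` T) = UNIV"
    "\<And>z z'. z \<in> int_vecs \<Longrightarrow> z' \<in> int_vecs \<Longrightarrow> z \<noteq> z' \<Longrightarrow>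
        interior ((\<lambda>x. x + z) ` T) \<inter> interior ((\<lambda>x. x + z') ` T) = {}"
    using assms(2) unfolding lattice_tiling_def by blast+
  have uI: "u \<in> int_vecs" using assms(4) by (simp add: nb_vertices_def)
  have tr0: "(\<lambda>x. x + 0) ` T = T" by simp
  have cltr: "closed ((\<lambda>x. x + v) ` T)" for v :: "real^'n"
    unfolding tr_eq using clT by (rule closed_translation)
  define W where "W = nb_vertices T - {0, u}"
  define P where "P \<longleftrightarrow> \<not> Bset T u \<subseteq> (\<Union>v\<in>W. Bset T v)"

  have nbhd: "\<exists>x U. x \<in> Bset T u \<and> open U \<and> x \<in> U \<and>
      (\<forall>y\<in>U. \<forall>v\<in>int_vecs. y \<in> (\<lambda>x. x + v) ` T \<longrightarrow> v = 0 \<or> v = u)" if P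
  proof -
    from \<open>P\<close> obtain x where x: "x \<in> Bset T u" "\<And>v. v \<in> W \<Longrightarrow> x \<notin> Bset T v"
      unfolding P_def by blast
    define A where "A = {v \<in> (int_vecs :: (real^'n) set). norm v \<le> norm x + 1 + R}"
    have finA: "finite A" unfolding A_def by (rule finite_lattice_ball)
    define U where "U = ball x 1 - (\<Union>v\<in>A - {0, u}. (\<lambda>y. y + v) ` T)"
    have oU: "open U" unfolding U_def using finA cltr
      by (intro open_Diff closed_UN) auto
    have xT: "x \<in> T" using x(1) by (simp add: Bset_def)
    have xU: "x \<in> U"
    proof -
      have "x \<notin> (\<lambda>y. y + v) ` T" if "v \<in> A - {0, u}" for v
      proof
        assume xv: "x \<in> (\<lambda>y. y + v) ` T"
        have vI: "v \<in> int_vecs" using that by (simp add: A_def)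
        have "x \<in> Bset T v" using xT xv by (simp add: Bset_def)
        then have "v \<in> W" using vI that by (auto simp: W_def nb_vertices_def)
        then show False using x(2) \<open>x \<in> Bset T v\<close> by blast
      qed
      then show ?thesis unfolding U_def by auto
    qed
    have propU: "\<forall>y\<in>U. \<forall>v\<in>int_vecs. y \<in> (\<lambda>x. x + v) ` T \<longrightarrow> v = 0 \<or> v = u"
    proof (intro ballI impI)
      fix y v assume yU: "y \<in> U" and vI: "v \<in> int_vecs" and yv: "y \<in> (\<lambda>x. x + v) ` T"
      from yv obtain t where t: "t \<in> T" "y = t + v" by auto
      have "norm (y - x) < 1" using yU by (simp add: U_def dist_norm norm_minus_commute)
      then have "norm y \<le> norm x + 1"  using norm_triangle_ineq2[of y x] by linarith
      moreover have "norm v \<le> norm y + norm t" using t norm_triangle_ineq4[of y t] by simp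
      ultimately have "norm v \<le> norm x + 1 + R" using R[OF t(1)] by linarith
      then have "v \<in> A" using vI by (simp add: A_def)
      then show "v = 0 \<or> v = u" using yU yv unfolding U_def by blast
    qed
    show ?thesis using x(1) oU xU propU by blast
  qed

  have b2a: "is_face T u" if P
  proof -
    from nbhd[OF \<open>P\<close>] obtain x U where xU: "x \<in> Bset T u" "open U" "x \<in> U"
      and propU: "\<And>y v. y \<in> U \<Longrightarrow> v \<in> int_vecs \<Longrightarrow> y \<in> (\<lambda>x. x + v) ` T \<Longrightarrow> v = 0 \<or> v = u" by blast
    have Usub: "U \<subseteq> T \<union> (\<lambda>y. y + u) ` T"
    proof
      fix y assume yU: "y \<in> U"
      have "y \<in> (\<Union>z\<in>int_vecs. (\<lambda>x. x + z) ` T)" using tiling(2) by simp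
      then obtain z where z: "z \<in> int_vecs" "y \<in> (\<lambda>x. x + z) ` T" by blast
      from propU[OF yU z] have "z = 0 \<or> z = u" .
      then show "y \<in> T \<union> (\<lambda>y. y + u) ` T" using z(2) by auto
    qed
    have "U \<inter> frontier T \<subseteq> Bset T u"
    proof
      fix y assume y: "y \<in> U \<inter> frontier T"
      have yT: "y \<in> T" using y frontier_subset_closed[OF clT] by blast
      have "y \<in> (\<lambda>y. y + u) ` T"
      proof (rule ccontr)
        assume ny: "y \<notin> (\<lambda>y. y + u) ` T"
        have "open (U - (\<lambda>y. y + u) ` T)" using xU(2) cltr by (intro open_Diff)
        moreover have "y \<in> U - (\<lambda>y. y + u) ` T" using y ny by blast
        moreover have "U - (\<lambda>y. y + u) ` T \<subseteq> T" using Usub by blast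
        ultimately have "y \<in> interior T" by (meson interiorI)
        then show False using y by (simp add: frontier_def)
      qed
      then show "y \<in> Bset T u" using yT by (simp add: Bset_def)
    qed
    then show ?thesis unfolding is_face_def using xU Usub by blast
  qed

  have a2b: P if "is_face T u"
  proof -
    from that obtain x U where x: "x \<in> Bset T u" and oU: "open U" and xU: "x \<in> U"
      and Usub: "U \<subseteq> T \<union> (\<lambda>y. y + u) ` T" unfolding is_face_def by blast
    have "x \<notin> Bset T v" if vW: "v \<in> W" for v
    proof
      assume xv: "x \<in> Bset T v"
      have vI: "v \<in> int_vecs" and v0: "v \<noteq> 0" and vu: "v \<noteq> u" using vW by (auto simp: W_def nb_vertices_def)
      have "(\<lambda>y. y + v) ` T = closure (interior ((\<lambda>y. y + v) ` T))"
        unfolding tr_eq interior_translation closure_translation using tiling(1) by simp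
      then have "x \<in> closure (interior ((\<lambda>y. y + v) ` T))" using xv by (simp add: Bset_def)
      then have One: "U \<inter> interior ((\<lambda>y. y + v) ` T) \<noteq> {}"
        using open_Int_closure_eq_empty[OF oU, of "interior ((\<lambda>y. y + v) ` T)"] xU by blast
      define Oo where "Oo = U \<inter> interior ((\<lambda>y. y + v) ` T)"
      have oOo: "open Oo" unfolding Oo_def using oU by blast
      have d0: "interior T \<inter> interior ((\<lambda>y. y + v) ` T) = {}"
        using tiling(3)[OF int_vecs_zero vI] v0 by simp
      have du: "interior ((\<lambda>y. y + u) ` T) \<inter> interior ((\<lambda>y. y + v) ` T) = {}"
        using tiling(3)[OF uI vI] vu by simp
      have "Oo - T \<subseteq> interior ((\<lambda>y. y + u) ` T)"
      proof (rule interior_maximal)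
        show "Oo - T \<subseteq> (\<lambda>y. y + u) ` T" using Usub Oo_def by blast
        show "open (Oo - T)" using oOo clT by (rule open_Diff)
      qed
      then have "Oo - T = {}" using du Oo_def by blast
      then have "Oo \<subseteq> interior T" using oOo by (simp add: interior_maximal)
      then have "Oo = {}" using d0 Oo_def by blast
      then show False using One Oo_def by simp
    qed
    then show P using x unfolding P_def by blast
  qed

  have c2b: P if "\<exists>w::nat list. set w \<subseteq> {1..m} \<and> path_word M m k T u w \<and>
              (\<forall>v\<in>W. \<not> path_word M m k T v w)"
  proof -
    from that obtain w where w: "set w \<subseteq> {1..m}" "path_word M m k T u w"
      "\<And>v. v \<in> W \<Longrightarrow> \<not> path_word M m k T v w" by blast
    from sa_path_iff[OF S uI w(1)] w(2) obtain x where
      x: "x \<in> fw (matrix_inv M) k w ` T" "x \<in> (\<lambda>x. x + u) ` T" by blast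
    have xT: "x \<in> T" using sa_fw_T[OF S w(1)] x(1) by blast
    have "x \<notin> Bset T v" if "v \<in> W" for v
    proof
      assume "x \<in> Bset T v"
      then have "fw (matrix_inv M) k w ` T \<inter> (\<lambda>x. x + v) ` T \<noteq> {}" using x(1) by (auto simp: Bset_def)
      moreover have "v \<in> int_vecs" using that by (simp add: W_def nb_vertices_def)
      ultimately have "path_word M m k T v w" using sa_path_iff[OF S _ w(1)] by blast
      then show False using w(3) that by blast
    qed
    moreover have "x \<in> Bset T u" using xT x(2) by (simp add: Bset_def)
    ultimately show P unfolding P_def by blast
  qed

  have b2c: "\<exists>w::nat list. set w \<subseteq> {1..m} \<and> path_word M m k T u w \<and>
              (\<forall>v\<in>W. \<not> path_word M m k T v w)" if P
  proof -
    from nbhd[OF \<open>P\<close>] obtain x U where xU: "x \<in> Bset T u" "open U" "x \<in> U"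
      and propU: "\<And>y v. y \<in> U \<Longrightarrow> v \<in> int_vecs \<Longrightarrow> y \<in> (\<lambda>x. x + v) ` T \<Longrightarrow> v = 0 \<or> v = u" by blast
    obtain r where r: "r > 0" "ball x r \<subseteq> U" using xU(2,3) open_contains_ball by blast
    have ev: "\<forall>c. is_eigenvalue M c \<longrightarrow> norm c > 1" using S by (simp add: sa_setting_def)
    from vec_contract[OF ev sa_inv(1)[OF S]] obtain C q where Cq: "0 \<le> C" "0 < q" "q < 1"
      and contr: "\<And>p d. norm (((*v) (matrix_inv M) ^^ p) d) \<le> C * q^p * norm d" by blast
    define K where "K = C * (2 * R) + 1"
    have "0 \<le> C * (2 * R)" using Cq R0 by simp
    then have K0: "K > 0" by (simp add: K_def)
    obtain p where p: "q ^ p < r / K" using real_arch_pow_inv[of "r / K" q] r K0 Cq by auto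
    have xT: "x \<in> T" using xU(1) by (simp add: Bset_def)
    from sa_cover[OF S xT, of p] obtain w z where w: "length w = p" "set w \<subseteq> {1..m}"
      and z: "z \<in> T" "x = fw (matrix_inv M) k w z" by blast
    have sub: "fw (matrix_inv M) k w ` T \<subseteq> ball x r"
    proof
      fix y assume "y \<in> fw (matrix_inv M) k w ` T"
      then obtain t where t: "t \<in> T" "y = fw (matrix_inv M) k w t" by blast
      have "dist x y = norm (((*v) (matrix_inv M) ^^ p) (z - t))"
        using fw_diff[of "matrix_inv M" k w z t] w(1) z t by (simp add: dist_norm)
      also have "\<dots> \<le> C * q^p * norm (z - t)" by (rule contr)
      also have "\<dots> \<le> C * q^p * (2 * R)"
      proof (rule mult_left_mono)
        show "norm (z - t) \<le> 2 * R" using R[OF z(1)] R[OF t(1)] norm_triangle_ineq4[of z t] by linarith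
        show "0 \<le> C * q^p" using Cq by simp
      qed
      also have "\<dots> \<le> K * q^p" using Cq by (simp add: K_def algebra_simps)
      also have "\<dots> < K * (r / K)" using p K0 by (intro mult_strict_left_mono)
      also have "\<dots> = r" using K0 by simp
      finally show "y \<in> ball x r" by simp
    qed
    have "path_word M m k T u w"
      using sa_path_iff[OF S uI w(2)] z xU(1) by (auto simp: Bset_def)
    moreover have "\<not> path_word M m k T v w" if vW: "v \<in> W" for v
    proof
      assume pv: "path_word M m k T v w"
      have vI: "v \<in> int_vecs" using vW by (simp add: W_def nb_vertices_def)
      from sa_path_iff[OF S vI w(2)] pv obtain y where
        y: "y \<in> fw (matrix_inv M) k w ` T" "y \<in> (\<lambda>x. x + v) ` T" by blast
      have "y \<in> U" using y(1) sub r(2) by blast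
      from propU[OF this vI y(2)] vW show False by (auto simp: W_def)
    qed
    ultimately show ?thesis using w(2) by blast
  qed

  show ?thesis using a2b b2a b2c c2b unfolding P_def W_def by blast
qed

end
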